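(* Let $G$, $\widehat{D}$, $\mathcal{C}$, $\mathbf{H}_d$ and $D$ be as in the context. If $\widehat{D}$ is a chainable distance function, then the EC-distance $D:G\to\mathbb{R}_+$ has minima only on the curve $\mathcal{C}$ (i.e., no point $\mathbf{B}\notin\mathcal{C}$ is a local minimum of $D$). Furthermore, all these minima are global.
   Context: $G$ is a connected matrix Lie group of $n\times n$ real matrices of dimension $m$, with Lie algebra $\mathfrak{g}$, basis $\mathbf{E}_1,\dots,\mathbf{E}_m$, and $S(\boldsymbol{\zeta})=\sum_k\zeta_k\mathbf{E}_k$. For $f:G\to\mathbb{R}$, $\mathrm{L}[f](\mathbf{G})$ is the row vector with $j$-th entry $\lim_{\epsilon\to0}\frac1\epsilon(f(\exp(S(\mathbf{e}_j)\epsilon)\mathbf{G})-f(\mathbf{G}))$; partial versions $\mathrm{L}_{\mathbf{V}},\mathrm{L}_{\mathbf{W}}$ are defined for two-argument functions; differentiability at a point means these limits exist and are continuous there. An EE-distance function is $\widehat{D}:G\times G\to\mathbb{R}_+$ with: (a) $\widehat{D}(\mathbf{V},\mathbf{W})\ge0$, $=0$ iff $\mathbf{V}=\mathbf{W}$; (b) differentiable in both arguments almost everywhere, with some $D_{\min,\mathcal{C}}>0$ such that the derivatives exist whenever $0<\widehat{D}<D_{\min,\mathcal{C}}$, and where a partial $\mathrm{L}$-derivative does not exist all its directional limits exist and are bounded. A path generating function is $\Phi:[0,1]\times G\times G\to G$, differentiable in $\sigma$, with $\Phi(0,\mathbf{V},\mathbf{W})=\mathbf{V}$, $\Phi(1,\mathbf{V},\mathbf{W})=\mathbf{W}$.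 $\widehat{D}$ is chainable if it is an EE-distance and there exists a path generating function $\Phi$ with $\widehat{D}(\mathbf{V},\mathbf{W})=\widehat{D}(\mathbf{V},\Phi(\sigma,\mathbf{V},\mathbf{W}))+\widehat{D}(\Phi(\sigma,\mathbf{V},\mathbf{W}),\mathbf{W})$ for all $\mathbf{V},\mathbf{W}\in G$, $\sigma\in[0,1]$. $\mathcal{C}$ is the image of a differentiable map $\mathbf{H}_d:[0,1]\to G$ without self-intersections, and the EC-distance is $D(\mathbf{H})\triangleq\min_{s\in[0,1]}\widehat{D}(\mathbf{H},\mathbf{H}_d(s))$. *)

theory Defs
  imports "HOL-Analysis.Analysis"
begin

type_synonym 'n rmat = "real^'n^'n"

fun mpow :: "'n::finite rmat \<Rightarrow> nat \<Rightarrow> 'n rmat" where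
  "mpow A 0 = mat 1"
| "mpow A (Suc k) = A ** mpow A k"

definition mexp :: "'n::finite rmat \<Rightarrow> 'n rmat" where
  "mexp A = (\<Sum>k. (1 / fact k) *\<^sub>R mpow A k)"

definition matrix_lie_group :: "'n::finite rmat set \<Rightarrow> bool" where
  "matrix_lie_group G \<longleftrightarrow>
     G \<subseteq> {A. invertible A} \<and> mat 1 \<in> G \<and>
     (\<forall>A\<in>G. \<forall>B\<in>G. A ** B \<in> G) \<and> (\<forall>A\<in>G. matrix_inv A \<in> G) \<and>
     closedin (top_of_set {A. invertible A}) G"

definition lie_algebra :: "'n::finite rmat set \<Rightarrow> 'n rmat set" where
  "lie_algebra G = {X. \<forall>t::real. mexp (t *\<^sub>R X) \<in> G}"

text \<open>The basis E_1..E_m of the Lie algebra is indexed by a finite type 'm, so m = CARD('m).\<close>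
definition lie_basis :: "'n::finite rmat set \<Rightarrow> ('m::finite \<Rightarrow> 'n rmat) \<Rightarrow> bool" where
  "lie_basis G E \<longleftrightarrow> inj E \<and> independent (range E) \<and> span (range E) = lie_algebra G"

definition Smap :: "('m::finite \<Rightarrow> 'n::finite rmat) \<Rightarrow> real^'m \<Rightarrow> 'n rmat" where
  "Smap E \<zeta> = (\<Sum>k\<in>UNIV. (\<zeta> $ k) *\<^sub>R E k)"

definition Lquot :: "('m::finite \<Rightarrow> 'n::finite rmat) \<Rightarrow> ('n rmat \<Rightarrow> real) \<Rightarrow> 'n rmat \<Rightarrow> real^'m \<Rightarrow> real \<Rightarrow> real" where
  "Lquot E f X \<zeta> \<epsilon> = (f (mexp (\<epsilon> *\<^sub>R Smap E \<zeta>) ** X) - f X) / \<epsilon>"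

definition L_exists :: "('m::finite \<Rightarrow> 'n::finite rmat) \<Rightarrow> ('n rmat \<Rightarrow> real) \<Rightarrow> 'n rmat \<Rightarrow> bool" where
  "L_exists E f X \<longleftrightarrow> (\<forall>j. \<exists>l. (Lquot E f X (axis j 1) \<longlongrightarrow> l) (at 0))"

definition Lder :: "('m::finite \<Rightarrow> 'n::finite rmat) \<Rightarrow> ('n rmat \<Rightarrow> real) \<Rightarrow> 'n rmat \<Rightarrow> real^'m" where
  "Lder E f X = (\<chi> j. Lim (at 0) (Lquot E f X (axis j 1)))"

definition LderV :: "('m::finite \<Rightarrow> 'n::finite rmat) \<Rightarrow> ('n rmat \<Rightarrow> 'n rmat \<Rightarrow> real) \<Rightarrow> 'n rmat \<times> 'n rmat \<Rightarrow> real^'m" where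
  "LderV E F p = Lder E (\<lambda>X. F X (snd p)) (fst p)"

definition LderW :: "('m::finite \<Rightarrow> 'n::finite rmat) \<Rightarrow> ('n rmat \<Rightarrow> 'n rmat \<Rightarrow> real) \<Rightarrow> 'n rmat \<times> 'n rmat \<Rightarrow> real^'m" where
  "LderW E F p = Lder E (F (fst p)) (snd p)"

definition LdiffV_at :: "'n::finite rmat set \<Rightarrow> ('m::finite \<Rightarrow> 'n rmat) \<Rightarrow> ('n rmat \<Rightarrow> 'n rmat \<Rightarrow> real) \<Rightarrow> 'n rmat \<Rightarrow> 'n rmat \<Rightarrow> bool" where
  "LdiffV_at G E F V W \<longleftrightarrow> L_exists E (\<lambda>X. F X W) V \<and>
     continuous (at (V, W) within {(X, Y). X \<in> G \<and> Y \<in> G \<and> L_exists E (\<lambda>Z. F Z Y) X}) (LderV E F)"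

definition LdiffW_at :: "'n::finite rmat set \<Rightarrow> ('m::finite \<Rightarrow> 'n rmat) \<Rightarrow> ('n rmat \<Rightarrow> 'n rmat \<Rightarrow> real) \<Rightarrow> 'n rmat \<Rightarrow> 'n rmat \<Rightarrow> bool" where
  "LdiffW_at G E F V W \<longleftrightarrow> L_exists E (F V) W \<and>
     continuous (at (V, W) within {(X, Y). X \<in> G \<and> Y \<in> G \<and> L_exists E (F X) Y}) (LderW E F)"

definition dirlims_bounded :: "('m::finite \<Rightarrow> 'n::finite rmat) \<Rightarrow> ('n rmat \<Rightarrow> real) \<Rightarrow> 'n rmat \<Rightarrow> bool" where
  "dirlims_bounded E f X \<longleftrightarrow>
     (\<forall>\<zeta>. \<exists>l. (Lquot E f X \<zeta> \<longlongrightarrow> l) (at_right 0)) \<and>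
     (\<exists>C. \<forall>\<zeta>. norm \<zeta> = 1 \<longrightarrow> \<bar>Lim (at_right 0) (Lquot E f X \<zeta>)\<bar> \<le> C)"

definition GG_null :: "'n::finite rmat set \<Rightarrow> ('m::finite \<Rightarrow> 'n rmat) \<Rightarrow> ('n rmat \<times> 'n rmat) set \<Rightarrow> bool" where
  "GG_null G E N \<longleftrightarrow> (\<exists>r>0. \<forall>V\<in>G. \<forall>W\<in>G.
     {p \<in> ball (0 :: (real^'m) \<times> (real^'m)) r. (mexp (Smap E (fst p)) ** V, mexp (Smap E (snd p)) ** W) \<in> N}
       \<in> null_sets lebesgue)"

definition EE_distance :: "'n::finite rmat set \<Rightarrow> ('m::finite \<Rightarrow> 'n rmat) \<Rightarrow> ('n rmat \<Rightarrow> 'n rmat \<Rightarrow> real) \<Rightarrow> bool" where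
  "EE_distance G E Dh \<longleftrightarrow>
     (\<forall>V\<in>G. \<forall>W\<in>G. Dh V W \<ge> 0 \<and> (Dh V W = 0 \<longleftrightarrow> V = W)) \<and>
     GG_null G E {(V, W). V \<in> G \<and> W \<in> G \<and> \<not> (LdiffV_at G E Dh V W \<and> LdiffW_at G E Dh V W)} \<and>
     (\<exists>Dmin>0. \<forall>V\<in>G. \<forall>W\<in>G. 0 < Dh V W \<and> Dh V W < Dmin \<longrightarrow>
        LdiffV_at G E Dh V W \<and> LdiffW_at G E Dh V W) \<and>
     (\<forall>V\<in>G. \<forall>W\<in>G. \<not> L_exists E (\<lambda>X. Dh X W) V \<longrightarrow> dirlims_bounded E (\<lambda>X. Dh X W) V) \<and>
     (\<forall>V\<in>G. \<forall>W\<in>G. \<not> L_exists E (Dh V) W \<longrightarrow> dirlims_bounded E (Dh V) W)"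

definition path_generating :: "'n::finite rmat set \<Rightarrow> (real \<Rightarrow> 'n rmat \<Rightarrow> 'n rmat \<Rightarrow> 'n rmat) \<Rightarrow> bool" where
  "path_generating G \<Phi> \<longleftrightarrow> (\<forall>V\<in>G. \<forall>W\<in>G.
     (\<forall>\<sigma>\<in>{0..1}. \<Phi> \<sigma> V W \<in> G) \<and>
     (\<lambda>\<sigma>. \<Phi> \<sigma> V W) differentiable_on {0..1} \<and>
     \<Phi> 0 V W = V \<and> \<Phi> 1 V W = W)"

definition chainable :: "'n::finite rmat set \<Rightarrow> ('m::finite \<Rightarrow> 'n rmat) \<Rightarrow> ('n rmat \<Rightarrow> 'n rmat \<Rightarrow> real) \<Rightarrow> bool" where
  "chainable G E Dh \<longleftrightarrow> EE_distance G E Dh \<and>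
     (\<exists>\<Phi>. path_generating G \<Phi> \<and>
        (\<forall>V\<in>G. \<forall>W\<in>G. \<forall>\<sigma>\<in>{0..1}. Dh V W = Dh V (\<Phi> \<sigma> V W) + Dh (\<Phi> \<sigma> V W) W))"

text \<open>D(H) = min over s in [0,1]; stated as an infimum, the attainment is an explicit hypothesis.\<close>
definition EC_dist :: "('n::finite rmat \<Rightarrow> 'n rmat \<Rightarrow> real) \<Rightarrow> (real \<Rightarrow> 'n rmat) \<Rightarrow> 'n rmat \<Rightarrow> real" where
  "EC_dist Dh Hd H = (INF s\<in>{0..1}. Dh H (Hd s))"

definition local_min_on :: "'a::topological_space set \<Rightarrow> ('a \<Rightarrow> real) \<Rightarrow> 'a \<Rightarrow> bool" where
  "local_min_on S f x \<longleftrightarrow> x \<in> S \<and> (\<exists>U. open U \<and> x \<in> U \<and> (\<forall>y\<in>U \<inter> S. f x \<le> f y))"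

end

theory Submission
  imports Defs
begin

lemma EC_dist_eq:
  fixes Dh :: "real^'n^'n \<Rightarrow> real^'n^'n \<Rightarrow> real"
  assumes nn: "\<forall>t\<in>{0..1}. Dh H (Hd t) \<ge> 0" and s: "s \<in> {0..1}"
    and m: "\<forall>t\<in>{0..1}. Dh H (Hd s) \<le> Dh H (Hd t)"
  shows "EC_dist Dh Hd H = Dh H (Hd s)"
  unfolding EC_dist_def
proof (rule antisym)
  have bdd: "bdd_below ((\<lambda>t. Dh H (Hd t)) ` {0..1})" using nn by (auto intro!: bdd_belowI[of _ 0])
  show "(INF t\<in>{0..1}. Dh H (Hd t)) \<le> Dh H (Hd s)"
    using s bdd by (intro cINF_lower) auto
  show "Dh H (Hd s) \<le> (INF t\<in>{0..1}. Dh H (Hd t))"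
    using s m by (intro cINF_greatest) auto
qed

theorem proposition2:
  fixes G :: "(real^'n^'n) set"
    and E :: "'m::finite \<Rightarrow> real^'n^'n"
    and Dh :: "real^'n^'n \<Rightarrow> real^'n^'n \<Rightarrow> real"
    and Hd :: "real \<Rightarrow> real^'n^'n"
  assumes G: "matrix_lie_group G" "connected G"
    and E: "lie_basis G E"
    and Hd: "Hd differentiable_on {0..1}" "\<forall>s\<in>{0..1}. Hd s \<in> G" "inj_on Hd {0..1}"
    and min_exists: "\<forall>H\<in>G. \<exists>s\<in>{0..1}. \<forall>t\<in>{0..1}. Dh H (Hd s) \<le> Dh H (Hd t)"
    and chain: "chainable G E Dh"
  shows "(\<forall>B. local_min_on G (EC_dist Dh Hd) B \<longrightarrow> B \<in> Hd ` {0..1}) \<and>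
         (\<forall>B. local_min_on G (EC_dist Dh Hd) B \<longrightarrow> (\<forall>H\<in>G. EC_dist Dh Hd B \<le> EC_dist Dh Hd H))"
proof -
  have EE: "EE_distance G E Dh" using chain unfolding chainable_def by (rule conjunct1)
  then have pos0: "\<forall>V\<in>G. \<forall>W\<in>G. Dh V W \<ge> 0 \<and> (Dh V W = 0 \<longleftrightarrow> V = W)"
    unfolding EE_distance_def by (rule conjunct1)
  then have pos: "\<And>V W. V \<in> G \<Longrightarrow> W \<in> G \<Longrightarrow> Dh V W \<ge> 0 \<and> (Dh V W = 0 \<longleftrightarrow> V = W)"
    by blast
  obtain \<Phi> where pg: "path_generating G \<Phi>"
    and ch: "\<forall>V\<in>G. \<forall>W\<in>G. \<forall>\<sigma>\<in>{0..1}. Dh V W = Dh V (\<Phi> \<sigma> V W) + Dh (\<Phi> \<sigma> V W) W"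
    using chain unfolding chainable_def by (elim conjE exE) blast
  have ECeq: "\<exists>s\<in>{0..1}. EC_dist Dh Hd H = Dh H (Hd s) \<and> (\<forall>t\<in>{0..1}. Dh H (Hd s) \<le> Dh H (Hd t))"
    if HG: "H \<in> G" for H
  proof -
    obtain s where s: "s \<in> {0..1}" "\<forall>t\<in>{0..1}. Dh H (Hd s) \<le> Dh H (Hd t)"
      using bspec[OF min_exists HG] by (elim bexE) blast
    have "\<forall>t\<in>{0..1}. Dh H (Hd t) \<ge> 0"
    proof
      fix t :: real assume "t \<in> {0..1}"
      then have "Hd t \<in> G" using Hd(2) by (rule bspec[rotated])
      then show "Dh H (Hd t) \<ge> 0" using pos[OF HG] by simp
    qed
    then have "EC_dist Dh Hd H = Dh H (Hd s)"
      using s(1) s(2) by (rule EC_dist_eq[where Dh=Dh and H=H and Hd=Hd and s=s])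
    then show ?thesis using s by blast
  qed
  have nnEC: "EC_dist Dh Hd H \<ge> 0" if HG: "H \<in> G" for H
  proof -
    obtain s where "s \<in> {0..1}" "EC_dist Dh Hd H = Dh H (Hd s)" using ECeq[OF HG] by blast
    moreover have "Hd s \<in> G" using Hd(2) \<open>s \<in> {0..1}\<close> by blast
    ultimately show ?thesis using pos[OF HG, of "Hd s"] by simp
  qed
  have part1: "B \<in> Hd ` {0..1}" if lm: "local_min_on G (EC_dist Dh Hd) B" for B
  proof (rule ccontr)
    assume nB: "B \<notin> Hd ` {0..1}"
    obtain U where U: "open U" "B \<in> U" "\<forall>y\<in>U \<inter> G. EC_dist Dh Hd B \<le> EC_dist Dh Hd y"
      and BG: "B \<in> G" using lm unfolding local_min_on_def by blast
    obtain s where s: "s \<in> {0..1}" "EC_dist Dh Hd B = Dh B (Hd s)"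
      using ECeq[OF BG] by blast
    define W where "W = Hd s"
    have WG: "W \<in> G" using Hd(2) s W_def by auto
    have WB: "W \<noteq> B" using nB s W_def by auto
    define P where "P = (\<lambda>\<sigma>. \<Phi> \<sigma> B W)"
    have PG: "\<forall>\<sigma>\<in>{0..1}. P \<sigma> \<in> G" and Pd: "P differentiable_on {0..1}"
      and P0: "P 0 = B" and P1: "P 1 = W"
    proof -
      have "(\<forall>\<sigma>\<in>{0..1}. \<Phi> \<sigma> B W \<in> G) \<and> (\<lambda>\<sigma>. \<Phi> \<sigma> B W) differentiable_on {0..1} \<and>
     \<Phi> 0 B W = B \<and> \<Phi> 1 B W = W" using pg BG WG unfolding path_generating_def by blast
      then show "\<forall>\<sigma>\<in>{0..1}. P \<sigma> \<in> G" "P differentiable_on {0..1}" "P 0 = B" "P 1 = W"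
        unfolding P_def by blast+
    qed
    have Pc: "continuous_on {0..1} P" using Pd differentiable_imp_continuous_on by blast
    define Z where "Z = {\<sigma>\<in>{0..1}. P \<sigma> = B}"
    have Zc: "closed Z" unfolding Z_def
      using continuous_closed_preimage_constant[OF Pc closed_atLeastAtMost, of B] by simp
    have Z0: "0 \<in> Z" using P0 Z_def by auto
    have Zb: "bdd_above Z" unfolding Z_def by (auto intro!: bdd_aboveI[of _ 1])
    define s0 where "s0 = Sup Z"
    have s0Z: "s0 \<in> Z" unfolding s0_def using closed_contains_Sup[OF _ Zb Zc] Z0 by blast
    have s0le: "\<And>x. x \<in> Z \<Longrightarrow> x \<le> s0" unfolding s0_def using Zb by (simp add: cSup_upper)
    have s01: "s0 \<in> {0..1}" "s0 \<noteq> 1" using s0Z P1 WB unfolding Z_def by auto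
    obtain e where e: "e > 0" "ball B e \<subseteq> U" using U open_contains_ball by blast
    obtain d where d: "d > 0" "\<forall>x'\<in>{0..1}. dist x' s0 < d \<longrightarrow> dist (P x') (P s0) < e"
      using Pc s01(1) e(1) unfolding continuous_on_iff by blast
    define \<sigma> where "\<sigma> = min 1 (s0 + d/2)"
    have \<sigma>1: "\<sigma> \<in> {0..1}" "\<sigma> > s0" using s01 d(1) \<sigma>_def by auto
    have "dist \<sigma> s0 < d" using \<sigma>1 d(1) \<sigma>_def by (auto simp: dist_real_def)
    moreover have "P s0 = B" using s0Z unfolding Z_def by blast
    ultimately have "dist (P \<sigma>) B < e" using d(2) \<sigma>1(1) by metis
    then have PU: "P \<sigma> \<in> U" using e by (auto simp: dist_commute)
    have PB: "P \<sigma> \<noteq> B"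
    proof
      assume "P \<sigma> = B"
      then have "\<sigma> \<in> Z" unfolding Z_def using \<sigma>1(1) by blast
      then show False using s0le \<sigma>1(2) by fastforce
    qed
    have PsG: "P \<sigma> \<in> G" using PG \<sigma>1 by auto
    have "EC_dist Dh Hd B \<le> EC_dist Dh Hd (P \<sigma>)" using U PU PsG by auto
    also have "\<dots> \<le> Dh (P \<sigma>) W"
    proof -
      obtain t where t: "t \<in> {0..1}" "EC_dist Dh Hd (P \<sigma>) = Dh (P \<sigma>) (Hd t)"
        "\<forall>t'\<in>{0..1}. Dh (P \<sigma>) (Hd t) \<le> Dh (P \<sigma>) (Hd t')"
        using ECeq[OF PsG] by blast
      then show ?thesis using s(1) W_def by auto
    qed
    also have "\<dots> = Dh B W - Dh B (P \<sigma>)"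
      using ch BG WG \<sigma>1(1) unfolding P_def by simp
    also have "\<dots> < Dh B W" using pos[OF BG PsG] PB by auto
    finally show False using s W_def by auto
  qed
  show ?thesis
  proof (intro conjI allI impI ballI)
    fix B assume "local_min_on G (EC_dist Dh Hd) B"
    then show "B \<in> Hd ` {0..1}" by (rule part1)
  next
    fix B H assume lm: "local_min_on G (EC_dist Dh Hd) B" and H: "H \<in> G"
    have BG: "B \<in> G" using lm unfolding local_min_on_def by blast
    obtain t where t: "t \<in> {0..1}" "B = Hd t" using part1[OF lm] by blast
    obtain s where s: "s \<in> {0..1}" "EC_dist Dh Hd B = Dh B (Hd s)"
      "\<forall>t\<in>{0..1}. Dh B (Hd s) \<le> Dh B (Hd t)" using ECeq[OF BG] by blast
    have "Dh B (Hd s) \<le> Dh B (Hd t)" using s(3) t(1) by blast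
    then have "EC_dist Dh Hd B \<le> Dh B B" using s(2) t(2) by simp
    also have "\<dots> = 0" using pos[OF BG BG] by auto
    finally show "EC_dist Dh Hd B \<le> EC_dist Dh Hd H" using nnEC[OF H] by linarith
  qed
qed

end
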